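(* Let $\mathfrak{S}=(\mathcal{X},\mathsf{S},\gamma,(\Lambda_{a})_{a\in\mathcal{A}})$ be a spectral decomposition system for the Euclidean space $\mathfrak{H}$ with spectral-induced ordering mapping $\tau$, and let $x,y\in\mathcal{X}$. Then the following are equivalent: (i) $y\in\operatorname{conv}(\mathsf{S}\cdot x)$; (ii) $\langle y,z\rangle\leq\langle\tau(x),\tau(z)\rangle$ for every $z\in\mathcal{X}$. Moreover, if $x$ and $y$ both lie in the range of $\gamma$, then each of (i) and (ii) is equivalent to (iii) $\langle y-x,z\rangle\leq 0$ for every $z$ in the range of $\gamma$.
   Context: A Euclidean space is a finite-dimensional real inner product space; inner products are written $\langle\cdot,\cdot\rangle$ and norms $\|\cdot\|$. Let $\mathfrak{H}$ and $\mathcal{X}$ be Euclidean spaces, let $\mathsf{S}$ be a group acting on $\mathcal{X}$ by linear isometries, let $\gamma\colon\mathfrak{H}\to\mathcal{X}$, and let $(\Lambda_a)_{a\in\mathcal{A}}$ be a family of linear operators from $\mathcal{X}$ to $\mathfrak{H}$. The orbit of $x$ is $\mathsf{S}\cdot x=\{s\cdot x: s\in\mathsf{S}\}$; a map $f$ on $\mathcal{X}$ is $\mathsf{S}$-invariant if $f(s\cdot x)=f(x)$ for all $s,x$. The tuple is a spectral decomposition system for $\mathfrak{H}$ if: [A] every $\Lambda_a$ is an isometry; [B] there exists an $\mathsf{S}$-invariant $\tau\colon\mathcal{X}\to\mathcal{X}$ with $\tau(x)\in\mathsf{S}\cdot x$ for all $x$ and $\gamma\circ\Lambda_a=\tau$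 for all $a$; [C] for every $X\in\mathfrak{H}$ there is $a$ with $X=\Lambda_a\gamma(X)$; [D] $\langle X,Y\rangle\leq\langle\gamma(X),\gamma(Y)\rangle$ for all $X,Y\in\mathfrak{H}$. The map $\tau$ in [B] is the spectral-induced ordering mapping. $\operatorname{conv}$ denotes convex hull. *)

theory Defs
  imports "HOL-Analysis.Analysis" "HOL-Algebra.Group"
begin

definition isometric_linear_action ::
  "('g, 'm) monoid_scheme \<Rightarrow> ('g \<Rightarrow> 'x::euclidean_space \<Rightarrow> 'x) \<Rightarrow> bool" where
  "isometric_linear_action G act \<longleftrightarrow>
     group G \<and>
     act \<one>\<^bsub>G\<^esub> = id \<and>
     (\<forall>g\<in>carrier G. \<forall>h\<in>carrier G. act (g \<otimes>\<^bsub>G\<^esub> h) = act g \<circ> act h) \<and>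
     (\<forall>g\<in>carrier G. linear (act g) \<and> (\<forall>v. norm (act g v) = norm v))"

definition orbit :: "('g, 'm) monoid_scheme \<Rightarrow> ('g \<Rightarrow> 'x \<Rightarrow> 'x) \<Rightarrow> 'x \<Rightarrow> 'x set" where
  "orbit G act x = {act g x | g. g \<in> carrier G}"

definition S_invariant :: "('g, 'm) monoid_scheme \<Rightarrow> ('g \<Rightarrow> 'x \<Rightarrow> 'x) \<Rightarrow> ('x \<Rightarrow> 'b) \<Rightarrow> bool" where
  "S_invariant G act f \<longleftrightarrow> (\<forall>g\<in>carrier G. \<forall>x. f (act g x) = f x)"

definition spectral_decomposition_system ::
  "('g, 'm) monoid_scheme \<Rightarrow> ('g \<Rightarrow> 'x::euclidean_space \<Rightarrow> 'x) \<Rightarrow> ('h::euclidean_space \<Rightarrow> 'x)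
   \<Rightarrow> 'a set \<Rightarrow> ('a \<Rightarrow> 'x \<Rightarrow> 'h) \<Rightarrow> ('x \<Rightarrow> 'x) \<Rightarrow> bool" where
  "spectral_decomposition_system G act \<gamma> A \<Lambda> \<tau> \<longleftrightarrow>
     isometric_linear_action G act \<and>
     \<comment> \<open>[A]\<close>
     (\<forall>a\<in>A. linear (\<Lambda> a) \<and> (\<forall>v. norm (\<Lambda> a v) = norm v)) \<and>
     \<comment> \<open>[B]\<close>
     S_invariant G act \<tau> \<and> (\<forall>x. \<tau> x \<in> orbit G act x) \<and> (\<forall>a\<in>A. \<gamma> \<circ> \<Lambda> a = \<tau>) \<and>
     \<comment> \<open>[C]\<close>
     (\<forall>X. \<exists>a\<in>A. X = \<Lambda> a (\<gamma> X)) \<and>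
     \<comment> \<open>[D]\<close>
     (\<forall>X Y. inner X Y \<le> inner (\<gamma> X) (\<gamma> Y))"

end

theory Submission
  imports Defs
begin

lemma inner_pres:
  fixes f :: "'a::real_inner \<Rightarrow> 'b::real_inner"
  assumes "linear f" "\<forall>v. norm (f v) = norm v"
  shows "inner (f u) (f v) = inner u v"
proof -
  have n: "inner (f w) (f w) = inner w w" for w
    using assms(2) by (metis power2_norm_eq_inner)
  have "inner (f (u+v)) (f (u+v)) = inner (u+v) (u+v)" by (rule n)
  hence "inner (f u + f v) (f u + f v) = inner (u+v) (u+v)"
    using linear_add[OF assms(1)] by simp
  hence "inner (f u) (f u) + 2 * inner (f u) (f v) + inner (f v) (f v)
       = inner u u + 2 * inner u v + inner v v"
    by (simp add: inner_add_left inner_add_right inner_commute)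
  thus ?thesis using n[of u] n[of v] by simp
qed

theorem proposition3p8:
  fixes G :: "('g, 'm) monoid_scheme"
    and act :: "'g \<Rightarrow> 'x::euclidean_space \<Rightarrow> 'x"
    and \<gamma> :: "'h::euclidean_space \<Rightarrow> 'x"
    and A :: "'a set"
    and \<Lambda> :: "'a \<Rightarrow> 'x \<Rightarrow> 'h"
    and \<tau> :: "'x \<Rightarrow> 'x"
    and x y :: 'x
  assumes "spectral_decomposition_system G act \<gamma> A \<Lambda> \<tau>"
  shows "(y \<in> convex hull (orbit G act x) \<longleftrightarrow> (\<forall>z. inner y z \<le> inner (\<tau> x) (\<tau> z)))
       \<and> (x \<in> range \<gamma> \<and> y \<in> range \<gamma> \<longrightarrow>
            ((y \<in> convex hull (orbit G act x) \<longleftrightarrow> (\<forall>z\<in>range \<gamma>. inner (y - x) z \<le> 0))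
             \<and> ((\<forall>z. inner y z \<le> inner (\<tau> x) (\<tau> z)) \<longleftrightarrow> (\<forall>z\<in>range \<gamma>. inner (y - x) z \<le> 0))))"
proof -
  note D = assms[unfolded spectral_decomposition_system_def isometric_linear_action_def
      S_invariant_def orbit_def]
  have grp: "group G" using D by blast
  have one: "act \<one>\<^bsub>G\<^esub> = id" using D by blast
  have mul: "\<And>g h. g \<in> carrier G \<Longrightarrow> h \<in> carrier G \<Longrightarrow> act (g \<otimes>\<^bsub>G\<^esub> h) = act g \<circ> act h"
    using D by blast
  have actlin: "\<And>g. g \<in> carrier G \<Longrightarrow> linear (act g) \<and> (\<forall>v. norm (act g v) = norm v)"
    using D by blast
  have Lam: "\<And>a. a \<in> A \<Longrightarrow> linear (\<Lambda> a) \<and> (\<forall>v. norm (\<Lambda> a v) = norm v)" using D by blast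
  have inv: "\<And>g w. g \<in> carrier G \<Longrightarrow> \<tau> (act g w) = \<tau> w" using D by blast
  have torb: "\<And>w. \<exists>g\<in>carrier G. \<tau> w = act g w" using D by blast
  have gL: "\<And>a. a \<in> A \<Longrightarrow> \<gamma> \<circ> \<Lambda> a = \<tau>" using D by blast
  have C: "\<And>X. \<exists>a\<in>A. X = \<Lambda> a (\<gamma> X)" using D by blast
  have DD: "\<And>X Y. inner X Y \<le> inner (\<gamma> X) (\<gamma> Y)" using D by blast
  obtain a0 where a0: "a0 \<in> A" using C by blast
  have K: "inner u v \<le> inner (\<tau> u) (\<tau> v)" for u v
  proof -
    have "inner u v = inner (\<Lambda> a0 u) (\<Lambda> a0 v)"
      using inner_pres[of "\<Lambda> a0"] Lam[OF a0] by simp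
    also have "\<dots> \<le> inner (\<gamma> (\<Lambda> a0 u)) (\<gamma> (\<Lambda> a0 v))" by (rule DD)
    also have "\<dots> = inner (\<tau> u) (\<tau> v)" using gL[OF a0] by (metis comp_apply)
    finally show ?thesis .
  qed
  have fixg: "\<tau> w = w" if wr: "w \<in> range \<gamma>" for w
  proof -
    obtain X where X: "w = \<gamma> X" using wr by blast
    obtain a where a: "a \<in> A" "X = \<Lambda> a (\<gamma> X)" using C by blast
    have "\<gamma> X = \<gamma> (\<Lambda> a (\<gamma> X))" using a by metis
    also have "\<dots> = \<tau> (\<gamma> X)" using gL[OF a(1)] by (metis comp_apply)
    finally show ?thesis using X by simp
  qed
  have trg: "\<tau> w \<in> range \<gamma>" for w
    using gL[OF a0] by (metis comp_apply rangeI)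
  have invact: "act (inv\<^bsub>G\<^esub> g) (act g w) = w" if "g \<in> carrier G" for g w
  proof -
    have "act (inv\<^bsub>G\<^esub> g) (act g w) = act (inv\<^bsub>G\<^esub> g \<otimes>\<^bsub>G\<^esub> g) w"
      using mul[of "inv\<^bsub>G\<^esub> g" g] that grp by (simp add: group.inv_closed)
    also have "\<dots> = w" using that grp one by (simp add: group.l_inv)
    finally show ?thesis .
  qed
  define Orb where "Orb = orbit G act x"
  have Oeq: "Orb = {act g x | g. g \<in> carrier G}" unfolding Orb_def orbit_def by simp
  have normO: "norm q = norm x" if "q \<in> Orb" for q using that actlin unfolding Oeq by auto
  have tauO: "\<tau> q = \<tau> x" if "q \<in> Orb" for q using that inv unfolding Oeq by auto
  have txO: "\<tau> x \<in> Orb" using torb unfolding Oeq by blast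
  have att: "\<exists>w\<in>Orb. inner w z = inner (\<tau> x) (\<tau> z)" for z
  proof -
    obtain s where s: "s \<in> carrier G" "\<tau> x = act s x" using torb by blast
    obtain t where t: "t \<in> carrier G" "\<tau> z = act t z" using torb by blast
    have it: "inv\<^bsub>G\<^esub> t \<in> carrier G" using t grp by (simp add: group.inv_closed)
    define w where "w = act (inv\<^bsub>G\<^esub> t) (act s x)"
    have "w = act (inv\<^bsub>G\<^esub> t \<otimes>\<^bsub>G\<^esub> s) x" unfolding w_def using mul[OF it s(1)] by simp
    moreover have "inv\<^bsub>G\<^esub> t \<otimes>\<^bsub>G\<^esub> s \<in> carrier G" using it s grp by (simp add: group.subgroupE(4) group.is_monoid monoid.m_closed)
    ultimately have wOrb: "w \<in> Orb" unfolding Oeq by blast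
    have "inner w z = inner (act (inv\<^bsub>G\<^esub> t) (act s x)) (act (inv\<^bsub>G\<^esub> t) (act t z))"
      unfolding w_def using invact[OF t(1)] by simp
    also have "\<dots> = inner (act s x) (act t z)" using inner_pres[of "act (inv\<^bsub>G\<^esub> t)"] actlin[OF it] by simp
    finally show ?thesis using wOrb s t by auto
  qed
  have closedO: "closed Orb"
  proof -
    have "closure Orb \<subseteq> Orb"
    proof
      fix p assume p: "p \<in> closure Orb"
      have "Orb \<subseteq> {q. inner p q \<le> inner (\<tau> x) (\<tau> p)}"
        using K tauO by (metis (mono_tags, lifting) inner_commute mem_Collect_eq subsetI)
      hence "closure Orb \<subseteq> {q. inner p q \<le> inner (\<tau> x) (\<tau> p)}"
        by (rule closure_minimal) (rule closed_halfspace_le)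
      hence ip: "inner p p \<le> inner (\<tau> x) (\<tau> p)" using p by blast
      have "Orb \<subseteq> sphere 0 (norm x)" using normO by auto
      hence "closure Orb \<subseteq> sphere 0 (norm x)" by (rule closure_minimal) simp
      hence np: "norm p = norm x" using p by auto
      obtain t where t: "t \<in> carrier G" "\<tau> p = act t p" using torb by blast
      obtain s where s: "s \<in> carrier G" "\<tau> x = act s x" using torb by blast
      have ntp: "norm (\<tau> p) = norm p" using t actlin by auto
      have ntx: "norm (\<tau> x) = norm x" using s actlin by auto
      have "norm (\<tau> x - \<tau> p)^2 = norm (\<tau> x)^2 + norm (\<tau> p)^2 - 2 * inner (\<tau> x) (\<tau> p)"
        by (simp add: power2_norm_eq_inner inner_diff_left inner_diff_right inner_commute)
      also have "\<dots> \<le> 0" proof - have e0: "inner p p = norm p ^ 2" by (simp add: power2_norm_eq_inner) have e: "inner p p = norm x ^ 2" unfolding e0 np by (rule refl) have f: "norm (\<tau> p) = norm x" using ntp np by (rule trans) show ?thesis unfolding f ntx using e ip by linarith qed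
      finally have "\<tau> x = \<tau> p" by (metis norm_eq_zero power2_less_eq_zero_iff right_minus_eq)
      hence "act s x = act t p" using s t by simp
      hence "p = act (inv\<^bsub>G\<^esub> t) (act s x)" using invact[OF t(1)] by simp
      also have "\<dots> = act (inv\<^bsub>G\<^esub> t \<otimes>\<^bsub>G\<^esub> s) x"
        using mul[of "inv\<^bsub>G\<^esub> t" s] t s grp by (simp add: group.inv_closed)
      finally show "p \<in> Orb" unfolding Oeq
        using t s grp by (metis (mono_tags, lifting) group.inv_closed group.is_monoid mem_Collect_eq monoid.m_closed)
    qed
    thus ?thesis using closure_subset_eq by blast
  qed
  have compO: "compact Orb"
  proof -
    have "bounded Orb" using normO by (metis bounded_iff order_refl)
    thus ?thesis using closedO by (simp add: compact_eq_bounded_closed)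
  qed
  have closedH: "closed (convex hull Orb)" using compact_convex_hull[OF compO] compact_imp_closed by blast
  have I12: "y \<in> convex hull Orb \<longleftrightarrow> (\<forall>z. inner y z \<le> inner (\<tau> x) (\<tau> z))"
  proof
    assume "y \<in> convex hull Orb"
    moreover have "convex hull Orb \<subseteq> {q. \<forall>z. inner q z \<le> inner (\<tau> x) (\<tau> z)}"
    proof (rule hull_minimal)
      show "Orb \<subseteq> {q. \<forall>z. inner q z \<le> inner (\<tau> x) (\<tau> z)}"
      proof
        fix q assume q: "q \<in> Orb"
        show "q \<in> {q. \<forall>z. inner q z \<le> inner (\<tau> x) (\<tau> z)}"
          using K[of q] tauO[OF q] by simp
      qed
      have eq: "{q. \<forall>z. inner q z \<le> inner (\<tau> x) (\<tau> z)} = (\<Inter>z. {q. inner z q \<le> inner (\<tau> x) (\<tau> z)})"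
        by (auto simp: inner_commute)
      show "convex {q. \<forall>z. inner q z \<le> inner (\<tau> x) (\<tau> z)}"
        unfolding eq by (rule convex_INT) (rule convex_halfspace_le)
    qed
    ultimately have "y \<in> {q. \<forall>z. inner q z \<le> inner (\<tau> x) (\<tau> z)}" by (rule subsetD[rotated])
    thus "\<forall>z. inner y z \<le> inner (\<tau> x) (\<tau> z)" by simp
  next
    assume H: "\<forall>z. inner y z \<le> inner (\<tau> x) (\<tau> z)"
    show "y \<in> convex hull Orb"
    proof (rule ccontr)
      assume ny: "y \<notin> convex hull Orb"
      obtain a b where ab: "inner a y < b" "\<forall>q\<in>convex hull Orb. inner a q > b"
        using separating_hyperplane_closed_point[OF convex_convex_hull closedH ny] by blast
      obtain w where w: "w \<in> Orb" "inner w (-a) = inner (\<tau> x) (\<tau> (-a))" using att by blast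
      have "w \<in> convex hull Orb" using w(1) by (rule hull_inc)
      hence "inner a w > b" using ab(2) by blast
      moreover have "inner y (-a) \<le> inner w (-a)" using H[rule_format, of "-a"] w(2) by linarith
      ultimately show False using ab(1) by (simp add: inner_commute)
    qed
  qed
  have I23: "(\<forall>z. inner y z \<le> inner (\<tau> x) (\<tau> z)) \<longleftrightarrow> (\<forall>z\<in>range \<gamma>. inner (y - x) z \<le> 0)"
    if xr: "x \<in> range \<gamma>" and yr: "y \<in> range \<gamma>"
  proof
    assume H: "\<forall>z. inner y z \<le> inner (\<tau> x) (\<tau> z)"
    show "\<forall>z\<in>range \<gamma>. inner (y - x) z \<le> 0"
    proof
      fix z assume "z \<in> range \<gamma>"
      thus "inner (y - x) z \<le> 0" using H[rule_format, of z] fixg xr by (simp add: inner_diff_left)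
    qed
  next
    assume H: "\<forall>z\<in>range \<gamma>. inner (y - x) z \<le> 0"
    show "\<forall>z. inner y z \<le> inner (\<tau> x) (\<tau> z)"
    proof
      fix z
      have "inner y z \<le> inner (\<tau> y) (\<tau> z)" by (rule K)
      also have "\<dots> = inner y (\<tau> z)" using fixg yr by simp
      also have "\<dots> \<le> inner x (\<tau> z)" using H[rule_format, OF trg[of z]] by (simp add: inner_diff_left)
      also have "\<dots> = inner (\<tau> x) (\<tau> z)" using fixg xr by simp
      finally show "inner y z \<le> inner (\<tau> x) (\<tau> z)" .
    qed
  qed
  show ?thesis using I12 I23 unfolding Orb_def by blast
qed

end
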